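(* Let $Y\subset B^+$ and $Z\subset A^+$ be finite composable sets with bijection $\beta:B\to Z$, and let $X=Y\circ_\beta Z$ be a trim decomposition. Let $\mathcal{B}=(Q,1,1)$ be the prefix automaton of $Y$ (over $B$), let $\mathcal{T}=(P,1,1)$ be the prefix transducer of $Z$ with respect to $\beta$, and let $\mathcal{A}=\mathcal{B}\circ\mathcal{T}$. Then: (a) $\mathcal{A}$ recognizes $X^*$ with multiplicities, i.e. for every $w\in A^*$ the number of paths from $(1,1)$ to $(1,1)$ in $\mathcal{A}$ labeled $w$ equals the number of factorizations of $w$ into words of $X$. (b) If $Y$ is complete, then the map $\rho:Q\times P\to P$, $\rho(q,p)=p$, is a reduction from $\mathcal{A}$ onto the prefix automaton of $Z$. (c) For $q,q'\in Q$ and $b\in B$, there is an edge $q\xrightarrow{b}q'$ in $\mathcal{B}$ if and only if there is a path in $\mathcal{A}$ from $(q,1)$ to $(q',1)$ labeled $\beta(b)$ all of whose intermediate states lie outside $\rho^{-1}(1)=Q\times\{1\}$.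
   Context: Two finite sets $Y\subset B^*$, $Z\subset A^*$ are composable if there is a bijection $\beta:B\to Z$ and every letter of $B$ occurs in some word of $Y$; extending $\beta$ to a morphism $B^*\to A^*$, $X=\beta(Y)$ is the composition $Y\circ_\beta Z$. The decomposition is trim if the restriction of $\beta$ to $Y$ is injective. A set $Y\subset B^*$ is complete if every word of $B^*$ is a factor of some word of $Y^*$. The prefix automaton of a finite set $X\subset A^+$ has as states the proper prefixes of words of $X$ (including the empty word $1$, which is initial and terminal), edges $p\xrightarrow{a}pa$ whenever $pa$ is a proper prefix of a word of $X$, and edges $p\xrightarrow{a}1$ whenever $pa\in X$. The prefix transducer of $Z$ (w.r.t. $\beta$) has the states $P$ of the prefix automaton of $Z$, edges $p\xrightarrow{a|1}pa$ when $pa\in P$, and edges $p\xrightarrow{a|b}1$ when $pa=\beta(b)\in Z$. The automaton $\mathcal{B}\circ\mathcal{T}$ (wreath product) has state set $Q\times P$, initial and terminal state $(1,1)$, and an edge $(q,p)\xrightarrow{a}(q',p')$ whenever $\mathcal{T}$ has an edge $p\xrightarrow{a|w}p'$ and either $w=1$ and $q'=q$, or $w=b\in B$ and $\mathcal{B}$ has an edge $q\xrightarrow{b}q'$. Recognition with multiplicities: the number of paths from initial to terminal state labeled $w$ equals the number of factorizations of $w$ into words of $X$. A reduction from $(P_1,i,t)$ onto $(Q_1,j,u)$ is a surjective map $\rho$ with $\rho(i)=j$, $\rho(t)=u$, such that for all states $q,q'$ and words $w$, there is a path $q\xrightarrow{w}q'$ in the target iff there is a path $p\xrightarrow{w}p'$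 in the source with $\rho(p)=q$, $\rho(p')=q'$. *)

theory Defs
  imports Main "HOL-Library.Sublist"
begin

text \<open>Words are lists; the empty word 1 is []. Automata are given by a state set
and an edge set of triples (source, letter, target).\<close>

definition prefix_states :: "'a list set \<Rightarrow> 'a list set" where
  "prefix_states X = {p. \<exists>x\<in>X. \<exists>u. u \<noteq> [] \<and> p @ u = x}"

definition prefix_edges :: "'a list set \<Rightarrow> ('a list \<times> 'a \<times> 'a list) set" where
  "prefix_edges X =
     {(p, a, p @ [a]) | p a. p \<in> prefix_states X \<and> p @ [a] \<in> prefix_states X}
   \<union> {(p, a, []) | p a. p \<in> prefix_states X \<and> p @ [a] \<in> X}"

text \<open>Prefix transducer of Z w.r.t. beta; output None stands for the empty word 1,
Some b for the letter b.\<close>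
definition prefix_transducer_edges ::
  "('b \<Rightarrow> 'a list) \<Rightarrow> 'a list set \<Rightarrow> ('a list \<times> 'a \<times> 'b option \<times> 'a list) set" where
  "prefix_transducer_edges \<beta> Z =
     {(p, a, None, p @ [a]) | p a. p \<in> prefix_states Z \<and> p @ [a] \<in> prefix_states Z}
   \<union> {(p, a, Some b, []) | p a b. p \<in> prefix_states Z \<and> p @ [a] = \<beta> b \<and> \<beta> b \<in> Z}"

definition wreath_edges ::
  "'q set \<Rightarrow> ('q \<times> 'b \<times> 'q) set \<Rightarrow> ('p \<times> 'a \<times> 'b option \<times> 'p) set
   \<Rightarrow> (('q \<times> 'p) \<times> 'a \<times> ('q \<times> 'p)) set" where
  "wreath_edges Q EB ET =
     {((q, p), a, (q, p')) | q p a p'. q \<in> Q \<and> (p, a, None, p') \<in> ET}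
   \<union> {((q, p), a, (q', p')) | q p a b q' p'. (p, a, Some b, p') \<in> ET \<and> (q, b, q') \<in> EB}"

definition run :: "('s \<times> 'c \<times> 's) set \<Rightarrow> 's list \<Rightarrow> 'c list \<Rightarrow> bool" where
  "run E ss w \<longleftrightarrow> length ss = Suc (length w) \<and>
     (\<forall>i < length w. (ss ! i, w ! i, ss ! Suc i) \<in> E)"

definition has_path :: "('s \<times> 'c \<times> 's) set \<Rightarrow> 's \<Rightarrow> 'c list \<Rightarrow> 's \<Rightarrow> bool" where
  "has_path E s w t \<longleftrightarrow> (\<exists>ss. run E ss w \<and> hd ss = s \<and> last ss = t)"

definition num_paths :: "('s \<times> 'c \<times> 's) set \<Rightarrow> 's \<Rightarrow> 'c list \<Rightarrow> 's \<Rightarrow> nat" where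
  "num_paths E s w t = card {ss. run E ss w \<and> hd ss = s \<and> last ss = t}"

definition num_factorizations :: "'a list set \<Rightarrow> 'a list \<Rightarrow> nat" where
  "num_factorizations X w = card {xs. xs \<in> lists X \<and> concat xs = w}"

definition reduction ::
  "('s \<Rightarrow> 'r) \<Rightarrow> 's set \<Rightarrow> ('s \<times> 'c \<times> 's) set \<Rightarrow> 's \<Rightarrow> 's
   \<Rightarrow> 'r set \<Rightarrow> ('r \<times> 'c \<times> 'r) set \<Rightarrow> 'r \<Rightarrow> 'r \<Rightarrow> bool" where
  "reduction \<rho> S1 E1 i t S2 E2 j u \<longleftrightarrow>
     \<rho> ` S1 = S2 \<and> \<rho> i = j \<and> \<rho> t = u \<and>
     (\<forall>q\<in>S2. \<forall>q'\<in>S2. \<forall>w. has_path E2 q w q' \<longleftrightarrow>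
        (\<exists>p\<in>S1. \<exists>p'\<in>S1. \<rho> p = q \<and> \<rho> p' = q' \<and> has_path E1 p w p'))"

definition composable :: "'b list set \<Rightarrow> 'a list set \<Rightarrow> ('b \<Rightarrow> 'a list) \<Rightarrow> bool" where
  "composable Y Z \<beta> \<longleftrightarrow> finite Y \<and> finite Z \<and> bij_betw \<beta> UNIV Z \<and>
     (\<forall>b. \<exists>y\<in>Y. b \<in> set y)"

definition compose :: "'b list set \<Rightarrow> ('b \<Rightarrow> 'a list) \<Rightarrow> 'a list set" where
  "compose Y \<beta> = (\<lambda>y. concat (map \<beta> y)) ` Y"

definition trim :: "'b list set \<Rightarrow> ('b \<Rightarrow> 'a list) \<Rightarrow> bool" where
  "trim Y \<beta> \<longleftrightarrow> inj_on (\<lambda>y. concat (map \<beta> y)) Y"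

definition complete :: "'b list set \<Rightarrow> bool" where
  "complete Y \<longleftrightarrow> (\<forall>u. \<exists>ys\<in>lists Y. sublist u (concat ys))"

end

theory Submission
  imports Defs
begin


lemma run_Nil: "run E ss [] \<longleftrightarrow> (\<exists>s. ss = [s])"
  unfolding run_def by (auto simp: length_Suc_conv)

lemma run_Cons: "run E (s # ss) (a # w) \<longleftrightarrow> ss \<noteq> [] \<and> (s, a, hd ss) \<in> E \<and> run E ss w"
proof
  assume r: "run E (s # ss) (a # w)"
  then have l: "length ss = Suc (length w)" unfolding run_def by simp
  then have ne: "ss \<noteq> []" by auto
  from r have "(s, a, ss ! 0) \<in> E" unfolding run_def by (metis length_Cons nth_Cons_0 nth_Cons_Suc zero_less_Suc)
  moreover have "run E ss w" unfolding run_def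
  proof (intro conjI allI impI)
    fix i assume "i < length w"
    with r show "(ss ! i, w ! i, ss ! Suc i) \<in> E" unfolding run_def
      by (metis Suc_less_eq length_Cons nth_Cons_Suc)
  qed (fact l)
  ultimately show "ss \<noteq> [] \<and> (s, a, hd ss) \<in> E \<and> run E ss w" using ne by (simp add: hd_conv_nth)
next
  assume h: "ss \<noteq> [] \<and> (s, a, hd ss) \<in> E \<and> run E ss w"
  show "run E (s # ss) (a # w)" unfolding run_def
  proof (intro conjI allI impI)
    show "length (s # ss) = Suc (length (a # w))" using h unfolding run_def by simp
    fix i assume "i < length (a # w)"
    then show "((s # ss) ! i, (a # w) ! i, (s # ss) ! Suc i) \<in> E"
      using h unfolding run_def by (cases i) (auto simp: hd_conv_nth)
  qed
qed

lemma run_ne: "run E ss w \<Longrightarrow> ss \<noteq> []"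
  unfolding run_def by auto

lemma run_glue: "run E r1 w1 \<Longrightarrow> run E r2 w2 \<Longrightarrow> last r1 = hd r2 \<Longrightarrow> run E (r1 @ tl r2) (w1 @ w2)"
proof (induction w1 arbitrary: r1)
  case Nil
  then obtain s where "r1 = [s]" by (auto simp: run_Nil)
  with Nil show ?case using run_ne[OF Nil(2)] by (cases r2) auto
next
  case (Cons a w1)
  then obtain s r1' where r1: "r1 = s # r1'" using run_ne by (cases r1) auto
  with Cons show ?case by (auto simp: run_Cons)
qed

lemma run_take: "run E ss w \<Longrightarrow> k \<le> length w \<Longrightarrow> run E (take (Suc k) ss) (take k w)"
  unfolding run_def by auto

lemma run_drop: "run E ss w \<Longrightarrow> k \<le> length w \<Longrightarrow> run E (drop k ss) (drop k w)"
  unfolding run_def by (auto simp: add.commute)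

lemma run_finite:
  assumes "finite S" and "\<And>s a t. (s, a, t) \<in> E \<Longrightarrow> t \<in> S"
  shows "finite {ss. run E ss w \<and> hd ss = s}"
proof (rule finite_subset)
  show "{ss. run E ss w \<and> hd ss = s} \<subseteq> {ss. set ss \<subseteq> insert s S \<and> length ss = Suc (length w)}"
  proof
    fix ss assume "ss \<in> {ss. run E ss w \<and> hd ss = s}"
    then have r: "run E ss w" and h: "hd ss = s" by auto
    have "set ss \<subseteq> insert s S"
    proof
      fix x assume x: "x \<in> set ss"
      then obtain i where i: "i < length ss" "ss ! i = x" by (auto simp: in_set_conv_nth)
      show "x \<in> insert s S"
      proof (cases i)
        case 0 then show ?thesis using i run_ne[OF r] h by (simp add: hd_conv_nth)
      next
        case (Suc j)
        then have "(ss ! j, w ! j, ss ! i) \<in> E" using r i unfolding run_def by auto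
        then show ?thesis using assms(2) i by auto
      qed
    qed
    then show "ss \<in> {ss. set ss \<subseteq> insert s S \<and> length ss = Suc (length w)}"
      using r by (auto simp: run_def)
  qed
  show "finite {ss. set ss \<subseteq> insert s S \<and> length ss = Suc (length w)}"
    using assms(1) by (intro finite_lists_length_eq) auto
qed

lemma notin_bt: "length r = Suc k \<Longrightarrow> (s \<notin> set (butlast (tl r))) \<longleftrightarrow> (\<forall>i. 0 < i \<and> i < k \<longrightarrow> r ! i \<noteq> s)"
proof -
  assume l: "length r = Suc k"
  have "set (butlast (tl r)) = {r ! i | i. 0 < i \<and> i < k}"
  proof -
    have "butlast (tl r) = map (\<lambda>i. r ! i) [1..<k]"
      by (rule nth_equalityI) (use l in \<open>auto simp: nth_butlast nth_tl\<close>)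
    then show ?thesis by force
  qed
  then show ?thesis by auto
qed

lemma first_return:
  fixes E :: "('s \<times> 'c \<times> 's) set"
  assumes fin: "\<And>w. finite {ss. run E ss w \<and> hd ss = s}" and wne: "w \<noteq> []"
  shows "card {ss. run E ss w \<and> hd ss = s \<and> last ss = s} =
    (\<Sum>k\<in>{1..length w}. card {r. run E r (take k w) \<and> hd r = s \<and> last r = s \<and> s \<notin> set (butlast (tl r))}
        * card {r. run E r (drop k w) \<and> hd r = s \<and> last r = s})"
proof -
  define FR where "FR k = {r. run E r (take k w) \<and> hd r = s \<and> last r = s \<and> s \<notin> set (butlast (tl r))}" for k
  define RS where "RS k = {r. run E r (drop k w) \<and> hd r = s \<and> last r = s}" for k
  define A where "A k = (\<lambda>(r1, r2). r1 @ tl r2) ` (FR k \<times> RS k)" for k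
  let ?n = "length w"
  have lenFR: "length r = Suc k" if "r \<in> FR k" "k \<le> ?n" for r k
    using that unfolding FR_def run_def by auto
  have nthA: "ss ! k = s \<and> (\<forall>i. 0 < i \<and> i < k \<longrightarrow> ss ! i \<noteq> s)" if "ss \<in> A k" "k \<le> ?n" for ss k
  proof -
    from that obtain r1 r2 where r: "r1 \<in> FR k" "r2 \<in> RS k" "ss = r1 @ tl r2" unfolding A_def by auto
    have l: "length r1 = Suc k" using lenFR r that by auto
    have "last r1 = s" using r(1) unfolding FR_def by auto
    moreover have "r1 \<noteq> []" using l by auto
    ultimately have "r1 ! k = s" using l by (simp add: last_conv_nth)
    moreover have "\<forall>i. 0 < i \<and> i < k \<longrightarrow> r1 ! i \<noteq> s" using r(1) notin_bt[OF l] unfolding FR_def by auto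
    ultimately show ?thesis using r(3) l by (auto simp: nth_append)
  qed
  have eq: "{ss. run E ss w \<and> hd ss = s \<and> last ss = s} = (\<Union>k\<in>{1..?n}. A k)"
  proof
    show "{ss. run E ss w \<and> hd ss = s \<and> last ss = s} \<subseteq> (\<Union>k\<in>{1..?n}. A k)"
    proof
      fix ss assume "ss \<in> {ss. run E ss w \<and> hd ss = s \<and> last ss = s}"
      then have r: "run E ss w" and h: "hd ss = s" and la: "last ss = s" by auto
      have lss: "length ss = Suc ?n" using r unfolding run_def by auto
      have ssn: "ss ! ?n = s" using la lss by (metis diff_Suc_1 last_conv_nth list.size(3) nat.distinct(1))
      define k where "k = (LEAST k. 0 < k \<and> ss ! k = s)"
      have ex: "0 < ?n \<and> ss ! ?n = s" using wne ssn by auto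
      have k1: "0 < k \<and> ss ! k = s" unfolding k_def by (rule LeastI[of _ ?n]) (fact ex)
      have k2: "k \<le> ?n" unfolding k_def by (rule Least_le) (fact ex)
      have k3: "ss ! i \<noteq> s" if "0 < i" "i < k" for i using not_less_Least[of i "\<lambda>k. 0 < k \<and> ss ! k = s"] that unfolding k_def by auto
      let ?r1 = "take (Suc k) ss" and ?r2 = "drop k ss"
      have "?r1 \<in> FR k" unfolding FR_def
      proof (intro CollectI conjI)
        show "run E ?r1 (take k w)" using run_take[OF r k2] .
        show "hd ?r1 = s" using h run_ne[OF r] by simp
        show "last ?r1 = s" using k1 k2 lss by (subst last_conv_nth) (auto simp: min_def)
        show "s \<notin> set (butlast (tl ?r1))"
          using notin_bt[of ?r1 k s] k2 lss k3 by auto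
      qed
      moreover have "?r2 \<in> RS k" unfolding RS_def
      proof (intro CollectI conjI)
        show "run E ?r2 (drop k w)" using run_drop[OF r k2] .
        show "hd ?r2 = s" using k1 k2 lss by (simp add: hd_drop_conv_nth)
        show "last ?r2 = s" using la k2 lss by simp
      qed
      moreover have "ss = ?r1 @ tl ?r2" by (metis append_take_drop_id drop_Suc tl_drop)
      ultimately have "ss \<in> A k" unfolding A_def by force
      then show "ss \<in> (\<Union>k\<in>{1..?n}. A k)" using k1 k2 by auto
    qed
    show "(\<Union>k\<in>{1..?n}. A k) \<subseteq> {ss. run E ss w \<and> hd ss = s \<and> last ss = s}"
    proof
      fix ss assume "ss \<in> (\<Union>k\<in>{1..?n}. A k)"
      then obtain k where k: "k \<in> {1..?n}" and ss: "ss \<in> A k" by auto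
      from ss obtain r1 r2 where r: "r1 \<in> FR k" "r2 \<in> RS k" "ss = r1 @ tl r2" unfolding A_def by auto
      have "run E ss w" using run_glue[of E r1 "take k w" r2 "drop k w"] r unfolding FR_def RS_def by auto
      moreover have "hd ss = s" using r run_ne[of E r1] unfolding FR_def by auto
      moreover have "last ss = s" using r unfolding FR_def RS_def
        by (cases "tl r2 = []") (auto simp: last_tl)
      ultimately show "ss \<in> {ss. run E ss w \<and> hd ss = s \<and> last ss = s}" by auto
    qed
  qed
  have finFR: "finite (FR k)" for k by (rule finite_subset[OF _ fin[of "take k w"]]) (auto simp: FR_def)
  have finRS: "finite (RS k)" for k by (rule finite_subset[OF _ fin[of "drop k w"]]) (auto simp: RS_def)
  have injA: "inj_on (\<lambda>(r1, r2). r1 @ tl r2) (FR k \<times> RS k)" if "k \<le> ?n" for k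
  proof (rule inj_onI, clarify)
    fix a b c d assume h: "a \<in> FR k" "b \<in> RS k" "c \<in> FR k" "d \<in> RS k" "a @ tl b = c @ tl d"
    have "length a = length c" using lenFR h that by auto
    then have "a = c" "tl b = tl d" using h(5) by auto
    moreover have "b \<noteq> []" "d \<noteq> []" "hd b = hd d" using h run_ne unfolding RS_def by auto
    ultimately show "a = c \<and> b = d" by (metis list.collapse)
  qed
  have disj: "A i \<inter> A j = {}" if "i \<in> {1..?n}" "j \<in> {1..?n}" "i \<noteq> j" for i j
  proof (rule ccontr)
    assume "A i \<inter> A j \<noteq> {}"
    then obtain ss where ss: "ss \<in> A i" "ss \<in> A j" by auto
    have "i \<le> ?n" "j \<le> ?n" "0 < i" "0 < j" using that by auto
    then have a: "ss ! i = s \<and> (\<forall>l. 0 < l \<and> l < i \<longrightarrow> ss ! l \<noteq> s)"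
      and b: "ss ! j = s \<and> (\<forall>l. 0 < l \<and> l < j \<longrightarrow> ss ! l \<noteq> s)"
      using nthA[OF ss(1)] nthA[OF ss(2)] by blast+
    show False
    proof (cases "i < j")
      case True then show False using a b \<open>0 < i\<close> by blast
    next
      case False then have "j < i" using that(3) by simp
      then show False using a b \<open>0 < j\<close> by blast
    qed
  qed
  have "card {ss. run E ss w \<and> hd ss = s \<and> last ss = s} = (\<Sum>k\<in>{1..?n}. card (A k))"
    unfolding eq by (rule card_UN_disjoint) (use disj finFR finRS in \<open>auto simp: A_def\<close>)
  also have "\<dots> = (\<Sum>k\<in>{1..?n}. card (FR k) * card (RS k))"
    by (rule sum.cong) (auto simp: A_def card_image[OF injA] card_cartesian_product)
  finally show ?thesis unfolding FR_def RS_def .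
qed

lemma length_concat_ge: "\<forall>x\<in>set xs. x \<noteq> [] \<Longrightarrow> length xs \<le> length (concat xs)"
proof (induction xs)
  case (Cons a xs)
  then have "length a \<ge> 1" by (simp add: Suc_le_eq)
  with Cons show ?case by simp
qed simp

lemma fact_finite:
  assumes "finite X" "[] \<notin> X"
  shows "finite {xs. xs \<in> lists X \<and> concat xs = w}"
  by (rule finite_subset[OF _ finite_lists_length_le[OF assms(1), of "length w"]])
     (use assms(2) length_concat_ge in fastforce)

lemma fact_rec:
  assumes "finite X" "[] \<notin> X" "w \<noteq> []"
  shows "num_factorizations X w =
    (\<Sum>k\<in>{1..length w}. (if take k w \<in> X then 1 else 0) * num_factorizations X (drop k w))"
proof -
  define S where "S u = {xs. xs \<in> lists X \<and> concat xs = u}" for u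
  let ?K = "{k \<in> {1..length w}. take k w \<in> X}"
  have eq: "S w = (\<Union>k\<in>?K. (Cons (take k w)) ` S (drop k w))"
  proof
    show "S w \<subseteq> (\<Union>k\<in>?K. (Cons (take k w)) ` S (drop k w))"
    proof
      fix xs assume "xs \<in> S w"
      then have h: "xs \<in> lists X" "concat xs = w" by (auto simp: S_def)
      then obtain x xs' where xs: "xs = x # xs'" using assms(3) by (cases xs) auto
      have x: "x \<in> X" "x \<noteq> []" using h xs assms(2) by auto
      have w: "w = x @ concat xs'" using h xs by simp
      let ?k = "length x"
      have "?k \<in> ?K" using x w by (auto simp: Suc_le_eq)
      moreover have "xs' \<in> S (drop ?k w)" using h xs w by (auto simp: S_def)
      ultimately show "xs \<in> (\<Union>k\<in>?K. (Cons (take k w)) ` S (drop k w))" using xs w by force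
    qed
    show "(\<Union>k\<in>?K. (Cons (take k w)) ` S (drop k w)) \<subseteq> S w"
      by (auto simp: S_def)
  qed
  have "card (S w) = (\<Sum>k\<in>?K. card ((Cons (take k w)) ` S (drop k w)))"
    unfolding eq
  proof (rule card_UN_disjoint)
    show "\<forall>i\<in>?K. \<forall>j\<in>?K. i \<noteq> j \<longrightarrow> Cons (take i w) ` S (drop i w) \<inter> Cons (take j w) ` S (drop j w) = {}"
    proof (intro ballI impI)
      fix i j assume "i \<in> ?K" "j \<in> ?K" "i \<noteq> j"
      then have "take i w \<noteq> take j w" by (metis (no_types, lifting) atLeastAtMost_iff length_take mem_Collect_eq min.absorb2)
      then show "Cons (take i w) ` S (drop i w) \<inter> Cons (take j w) ` S (drop j w) = {}" by auto
    qed
  qed (auto simp: S_def fact_finite[OF assms(1,2)])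
  also have "\<dots> = (\<Sum>k\<in>?K. card (S (drop k w)))"
    by (rule sum.cong) (auto simp: card_image)
  also have "\<dots> = (\<Sum>k\<in>{1..length w}. (if take k w \<in> X then 1 else 0) * card (S (drop k w)))"
    by (subst sum.inter_filter) (auto intro: sum.cong)
  finally show ?thesis unfolding num_factorizations_def S_def .
qed




definition blk :: "'q \<Rightarrow> 'a list \<Rightarrow> ('q \<times> 'a list) list" where
  "blk q u = map (\<lambda>i. (q, take i u)) [0..<length u]"

fun cf :: "('b \<Rightarrow> 'a list) \<Rightarrow> 'b list \<Rightarrow> 'b list \<Rightarrow> ('b list \<times> 'a list) list" where
  "cf \<beta> q [] = [([], [])]"
| "cf \<beta> q (b # y) = blk q (\<beta> b) @ cf \<beta> (q @ [b]) y"

lemma take_in_ps: "x \<in> X \<Longrightarrow> i < length x \<Longrightarrow> take i x \<in> prefix_states X"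
  unfolding prefix_states_def by (rule CollectI, rule bexI[of _ x]) (auto intro!: exI[of _ "drop i x"])

lemma ps_finite: "finite X \<Longrightarrow> finite (prefix_states X)"
proof -
  assume f: "finite X"
  have "prefix_states X \<subseteq> (\<Union>x\<in>X. (\<lambda>i. take i x) ` {..length x})"
  proof
    fix p assume "p \<in> prefix_states X"
    then obtain x u where "x \<in> X" "p @ u = x" unfolding prefix_states_def by auto
    then show "p \<in> (\<Union>x\<in>X. (\<lambda>i. take i x) ` {..length x})"
      by (intro UN_I[of x]) (auto intro!: image_eqI[of _ _ "length p"])
  qed
  then show ?thesis by (rule finite_subset) (use f in auto)
qed

lemma EB_iff: "(q, b, q') \<in> prefix_edges Y \<longleftrightarrow> q \<in> prefix_states Y \<and>
   ((q' = q @ [b] \<and> q @ [b] \<in> prefix_states Y) \<or> (q' = [] \<and> q @ [b] \<in> Y))"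
  unfolding prefix_edges_def by auto

locale L =
  fixes Y :: "'b list set" and Z :: "'a list set" and \<beta> :: "'b \<Rightarrow> 'a list"
  assumes Y0: "[] \<notin> Y" and Z0: "[] \<notin> Z" and comp: "composable Y Z \<beta>" and trm: "trim Y \<beta>"
begin

abbreviation "QQ \<equiv> prefix_states Y"
abbreviation "PP \<equiv> prefix_states Z"
abbreviation "EBB \<equiv> prefix_edges Y"
abbreviation "EZZ \<equiv> prefix_edges Z"
abbreviation "EAA \<equiv> wreath_edges (prefix_states Y) (prefix_edges Y) (prefix_transducer_edges \<beta> Z)"
abbreviation "XX \<equiv> compose Y \<beta>"

lemma finY: "finite Y" and finZ: "finite Z" and bij: "bij_betw \<beta> UNIV Z"
  and letters: "\<forall>b. \<exists>y\<in>Y. b \<in> set y"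
  using comp unfolding composable_def by auto

lemma inj_beta: "inj \<beta>" using bij by (simp add: bij_betw_def)
lemma beta_Z: "\<beta> b \<in> Z" using bij by (auto simp: bij_betw_def)
lemma beta_ne: "\<beta> b \<noteq> []" using beta_Z[of b] Z0 by auto
lemma Z_range: "z \<in> Z \<Longrightarrow> \<beta> (inv \<beta> z) = z"
  using bij by (metis bij_betw_imp_surj_on f_inv_into_f)

lemma Nil_Q: "[] \<in> QQ"
proof -
  obtain y where y: "y \<in> Y" using letters by blast
  then have "y \<noteq> []" using Y0 by auto
  then show ?thesis using y unfolding prefix_states_def by auto
qed

lemma Nil_P: "[] \<in> PP"
proof -
  have "\<beta> undefined \<in> Z" "\<beta> undefined \<noteq> []" using beta_Z beta_ne by auto
  then show ?thesis unfolding prefix_states_def by auto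
qed

lemma EZ_iff: "(p, a, p') \<in> EZZ \<longleftrightarrow> p \<in> PP \<and>
   ((p' = p @ [a] \<and> p @ [a] \<in> PP) \<or> (p' = [] \<and> p @ [a] \<in> Z))"
  unfolding prefix_edges_def by auto

lemma EA_iff: "((q, p), a, (q', p')) \<in> EAA \<longleftrightarrow>
   (q' = q \<and> p' = p @ [a] \<and> q \<in> QQ \<and> p \<in> PP \<and> p @ [a] \<in> PP) \<or>
   (p' = [] \<and> p \<in> PP \<and> (\<exists>b. p @ [a] = \<beta> b \<and> (q, b, q') \<in> EBB))"
  unfolding wreath_edges_def prefix_transducer_edges_def using beta_Z by auto

lemma EA_target: "(s, a, t) \<in> EAA \<Longrightarrow> t \<in> QQ \<times> PP"
proof -
  assume e: "(s, a, t) \<in> EAA"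
  obtain q p q' p' where st: "s = (q, p)" "t = (q', p')" by (cases s, cases t) auto
  show ?thesis using e unfolding st EA_iff EB_iff using Nil_Q Nil_P by auto
qed

lemma EA_fin: "finite {ss. run EAA ss w \<and> hd ss = s}"
  by (rule run_finite[of "QQ \<times> PP"]) (use EA_target ps_finite[OF finY] ps_finite[OF finZ] in \<open>auto intro: finite_cartesian_product\<close>)

end




context L
begin

lemma seg_nth:
  assumes r: "run EAA ss u" and h: "hd ss = (q, [])"
    and nz: "\<forall>i. 0 < i \<and> i < length u \<longrightarrow> snd (ss ! i) \<noteq> []"
  shows "i < length u \<Longrightarrow> ss ! i = (q, take i u)"
proof (induction i)
  case 0
  then show ?case using h run_ne[OF r] by (simp add: hd_conv_nth)
next
  case (Suc i)
  then have IH: "ss ! i = (q, take i u)" by simp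
  have e: "(ss ! i, u ! i, ss ! Suc i) \<in> EAA" using r Suc.prems unfolding run_def by auto
  obtain q' p' where s': "ss ! Suc i = (q', p')" by (cases "ss ! Suc i") auto
  have "p' \<noteq> []" using nz Suc.prems s' by (metis snd_conv zero_less_Suc)
  then have "q' = q \<and> p' = take i u @ [u ! i]" using e unfolding IH s' EA_iff by auto
  then show ?case using s' Suc.prems by (simp add: take_Suc_conv_app_nth)
qed

lemma seg_last:
  assumes r: "run EAA ss u" and h: "hd ss = (q, [])"
    and nz: "\<forall>i. 0 < i \<and> i < length u \<longrightarrow> snd (ss ! i) \<noteq> []"
    and une: "u \<noteq> []" and la: "last ss = (q', [])"
  shows "\<exists>b. u = \<beta> b \<and> (q, b, q') \<in> EBB"
proof -
  let ?n = "length u"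
  have l: "length ss = Suc ?n" using r unfolding run_def by simp
  have a: "ss ! (?n - 1) = (q, take (?n - 1) u)" using seg_nth[OF r h nz] une by simp
  have "ss ! ?n = (q', [])" using la l by (metis diff_Suc_1 last_conv_nth list.size(3) nat.distinct(1))
  moreover have "(ss ! (?n - 1), u ! (?n - 1), ss ! Suc (?n - 1)) \<in> EAA"
    using r une unfolding run_def by (metis Suc_pred diff_less length_greater_0_conv zero_less_one)
  ultimately have e: "((q, take (?n - 1) u), u ! (?n - 1), (q', [])) \<in> EAA" using a une by simp
  have u: "take (?n - 1) u @ [u ! (?n - 1)] = u"
    using une by (metis Suc_diff_1 length_greater_0_conv lessI take_Suc_conv_app_nth take_all_iff order.refl)
  show ?thesis using e une unfolding EA_iff u by auto
qed

lemma segrun: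
  assumes e: "(q, b, q') \<in> EBB"
  shows "run EAA (blk q (\<beta> b) @ [(q', [])]) (\<beta> b)"
proof -
  let ?u = "\<beta> b"
  have q: "q \<in> QQ" using e by (simp add: EB_iff)
  show ?thesis unfolding run_def
  proof (intro conjI allI impI)
    show "length (blk q ?u @ [(q', [])]) = Suc (length ?u)" by (simp add: blk_def)
    fix i assume i: "i < length ?u"
    have si: "(blk q ?u @ [(q', [])]) ! i = (q, take i ?u)" using i by (simp add: blk_def nth_append)
    have ti: "take i ?u \<in> PP" using take_in_ps[OF beta_Z i] .
    show "((blk q ?u @ [(q', [])]) ! i, ?u ! i, (blk q ?u @ [(q', [])]) ! Suc i) \<in> EAA"
    proof (cases "Suc i < length ?u")
      case True
      then have s1: "(blk q ?u @ [(q', [])]) ! Suc i = (q, take i ?u @ [?u ! i])"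
        by (simp add: blk_def nth_append take_Suc_conv_app_nth)
      have "take i ?u @ [?u ! i] \<in> PP" using take_in_ps[OF beta_Z True] i
        by (simp add: take_Suc_conv_app_nth)
      then show ?thesis unfolding si s1 EA_iff using q ti by auto
    next
      case False
      then have si': "(blk q ?u @ [(q', [])]) ! Suc i = (q', [])" using i by (simp add: blk_def nth_append)
      have "take i ?u @ [?u ! i] = ?u" using False i
        by (metis Suc_leI le_antisym not_less take_Suc_conv_app_nth take_all)
      then show ?thesis unfolding si si' EA_iff using ti e by auto
    qed
  qed
qed

lemma blk_len: "length (blk q u) = length u" by (simp add: blk_def)

lemma cf_len: "length (cf \<beta> q y) = Suc (length (concat (map \<beta> y)))"
  by (induction y arbitrary: q) (auto simp: blk_len)

lemma cf_hd: "y \<noteq> [] \<Longrightarrow> hd (cf \<beta> q y) = (q, [])"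
  by (cases y) (auto simp: blk_def beta_ne hd_append upt_conv_Cons[of 0])

lemma cf_ne: "cf \<beta> q y \<noteq> []"
  by (cases y) (auto simp: blk_def beta_ne)

lemma cf_last: "last (cf \<beta> q y) = ([], [])"
  by (induction y arbitrary: q) (auto simp: cf_ne)

lemma cf_run: "y \<noteq> [] \<Longrightarrow> q @ y \<in> Y \<Longrightarrow> run EAA (cf \<beta> q y) (concat (map \<beta> y))"
proof (induction y arbitrary: q)
  case Nil then show ?case by simp
next
  case (Cons b y)
  have qQ: "q \<in> QQ" using Cons.prems unfolding prefix_states_def by auto
  show ?case
  proof (cases "y = []")
    case True
    then have "(q, b, []) \<in> EBB" using qQ Cons.prems by (simp add: EB_iff)
    then show ?thesis using segrun True by simp
  next
    case False
    have "q @ [b] \<in> QQ" using Cons.prems False unfolding prefix_states_def by force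
    then have "(q, b, q @ [b]) \<in> EBB" using qQ by (simp add: EB_iff)
    then have r1: "run EAA (blk q (\<beta> b) @ [(q @ [b], [])]) (\<beta> b)" by (rule segrun)
    have r2: "run EAA (cf \<beta> (q @ [b]) y) (concat (map \<beta> y))" using Cons False by simp
    have "run EAA ((blk q (\<beta> b) @ [(q @ [b], [])]) @ tl (cf \<beta> (q @ [b]) y)) (\<beta> b @ concat (map \<beta> y))"
      by (rule run_glue[OF r1 r2]) (simp add: cf_hd False)
    moreover have "(blk q (\<beta> b) @ [(q @ [b], [])]) @ tl (cf \<beta> (q @ [b]) y) = cf \<beta> q (b # y)"
      using cf_hd[OF False, of "q @ [b]"] run_ne[OF r2] by (cases "cf \<beta> (q @ [b]) y") auto
    ultimately show ?thesis by simp
  qed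
qed

lemma cf_nz: "y \<noteq> [] \<Longrightarrow> 0 < i \<Longrightarrow> i < length (concat (map \<beta> y)) \<Longrightarrow> cf \<beta> q y ! i \<noteq> ([], [])"
proof (induction y arbitrary: q i)
  case Nil then show ?case by simp
next
  case (Cons b y)
  let ?m = "length (\<beta> b)"
  show ?case
  proof (cases "i < ?m")
    case True
    then have "cf \<beta> q (b # y) ! i = (q, take i (\<beta> b))" by (simp add: nth_append blk_def)
    then show ?thesis using True Cons.prems by auto
  next
    case False
    then have eq: "cf \<beta> q (b # y) ! i = cf \<beta> (q @ [b]) y ! (i - ?m)" by (simp add: nth_append blk_def)
    have yne: "y \<noteq> []" using False Cons.prems by auto
    show ?thesis
    proof (cases "i = ?m")
      case True
      then show ?thesis using eq cf_hd[OF yne] run_ne cf_len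
        by (metis (no_types, lifting) Nil_is_append_conv Zero_not_Suc diff_self_eq_0 fst_conv hd_conv_nth length_0_conv not_Cons_self2)
    next
      case False
      then show ?thesis using eq Cons.IH[OF yne, of "i - ?m" "q @ [b]"] Cons.prems \<open>\<not> i < ?m\<close> by auto
    qed
  qed
qed

lemma FR_char:
  "run EAA ss w \<Longrightarrow> hd ss = (q, []) \<Longrightarrow> last ss = ([], []) \<Longrightarrow> w \<noteq> [] \<Longrightarrow>
   (\<forall>i. 0 < i \<and> i < length w \<longrightarrow> ss ! i \<noteq> ([], [])) \<Longrightarrow>
   \<exists>y. y \<noteq> [] \<and> q @ y \<in> Y \<and> ss = cf \<beta> q y \<and> w = concat (map \<beta> y)"
proof (induction w arbitrary: ss q rule: length_induct)
  case (1 w)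
  note r = "1.prems"(1) and h = "1.prems"(2) and la = "1.prems"(3) and wne = "1.prems"(4) and nz = "1.prems"(5)
  let ?n = "length w"
  have lss: "length ss = Suc ?n" using r unfolding run_def by auto
  have ssn: "ss ! ?n = ([], [])" using la lss by (metis diff_Suc_1 last_conv_nth list.size(3) nat.distinct(1))
  define k where "k = (LEAST k. 0 < k \<and> snd (ss ! k) = [])"
  have ex: "0 < ?n \<and> snd (ss ! ?n) = []" using wne ssn by auto
  have k1: "0 < k \<and> snd (ss ! k) = []" unfolding k_def by (rule LeastI[of _ ?n]) (fact ex)
  have k2: "k \<le> ?n" unfolding k_def by (rule Least_le) (fact ex)
  have k3: "snd (ss ! i) \<noteq> []" if "0 < i" "i < k" for i
    using not_less_Least[of i "\<lambda>k. 0 < k \<and> snd (ss ! k) = []"] that unfolding k_def by auto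
  let ?r1 = "take (Suc k) ss" and ?u = "take k w"
  have r1: "run EAA ?r1 ?u" using run_take[OF r k2] .
  have h1: "hd ?r1 = (q, [])" using h run_ne[OF r] by simp
  have lu: "length ?u = k" using k2 by simp
  have nz1: "\<forall>i. 0 < i \<and> i < length ?u \<longrightarrow> snd (?r1 ! i) \<noteq> []" using k3 lu by auto
  obtain q' where sk: "ss ! k = (q', [])" using k1 by (cases "ss ! k") auto
  have la1: "last ?r1 = (q', [])" using sk k2 lss by (subst last_conv_nth) (auto simp: min_def)
  have une: "?u \<noteq> []" using k1 wne by simp
  obtain b where b: "?u = \<beta> b" "(q, b, q') \<in> EBB" using seg_last[OF r1 h1 nz1 une la1] by blast
  have blkeq: "take k ss = blk q (\<beta> b)"
  proof (rule nth_equalityI)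
    show "length (take k ss) = length (blk q (\<beta> b))" using lss k2 b(1)[symmetric] lu by (simp add: blk_len)
    fix i assume "i < length (take k ss)"
    then have i: "i < k" using lss k2 by simp
    have "?r1 ! i = (q, take i ?u)" using seg_nth[OF r1 h1 nz1] i lu by simp
    then show "take k ss ! i = blk q (\<beta> b) ! i" using i b(1)[symmetric] lu by (simp add: blk_def)
  qed
  show ?case
  proof (cases "k = ?n")
    case True
    then have "q' = []" using sk ssn by simp
    then have qb: "q @ [b] \<in> Y" using b(2) by (simp add: EB_iff)
    have "take (Suc k) ss = ss" using True lss by simp
    then have "ss = take k ss @ [ss ! k]" using True lss by (metis lessI take_Suc_conv_app_nth)
    then have "ss = cf \<beta> q [b]" using True blkeq ssn by simp
    moreover have "w = concat (map \<beta> [b])" using b(1) True by simp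
    ultimately show ?thesis using qb by blast
  next
    case False
    then have kn: "k < ?n" using k2 by simp
    have "q' \<noteq> []" using nz kn k1 sk by force
    then have qb: "q' = q @ [b]" using b(2) by (simp add: EB_iff)
    let ?r2 = "drop k ss" and ?v = "drop k w"
    have r2: "run EAA ?r2 ?v" using run_drop[OF r k2] .
    have h2: "hd ?r2 = (q @ [b], [])" using sk qb kn lss by (simp add: hd_drop_conv_nth)
    have la2: "last ?r2 = ([], [])" using la kn lss by simp
    have vne: "?v \<noteq> []" using kn by simp
    have nz2: "\<forall>i. 0 < i \<and> i < length ?v \<longrightarrow> ?r2 ! i \<noteq> ([], [])" using nz kn lss by auto
    have "length ?v < length w" using k1 kn by auto
    then obtain y where y: "y \<noteq> []" "(q @ [b]) @ y \<in> Y" "?r2 = cf \<beta> (q @ [b]) y" "?v = concat (map \<beta> y)"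
      using "1.IH" r2 h2 la2 vne nz2 by blast
    have "ss = take k ss @ drop k ss" by simp
    then have "ss = cf \<beta> q (b # y)" using blkeq y(3) by simp
    moreover have "w = concat (map \<beta> (b # y))" using b(1) y(4) by (metis append_take_drop_id concat.simps(2) list.simps(9))
    ultimately show ?thesis using y(2) by force
  qed
qed

end



context L
begin

lemma XX_fin: "finite XX" unfolding compose_def using finY by simp

lemma XX_nil: "[] \<notin> XX"
proof
  assume "[] \<in> XX"
  then obtain y where "y \<in> Y" "concat (map \<beta> y) = []" unfolding compose_def by auto
  then show False using Y0 beta_ne by (cases y) auto
qed

lemma R_val:
  assumes xne: "x \<noteq> []"
  shows "card {r. run EAA r x \<and> hd r = ([], []) \<and> last r = ([], []) \<and> ([], []) \<notin> set (butlast (tl r))}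
     = (if x \<in> XX then 1 else 0)"
proof -
  let ?S = "{r. run EAA r x \<and> hd r = ([], []) \<and> last r = ([], []) \<and> ([], []) \<notin> set (butlast (tl r))}"
  let ?T = "{y \<in> Y. concat (map \<beta> y) = x}"
  have eq: "?S = cf \<beta> [] ` ?T"
  proof
    show "?S \<subseteq> cf \<beta> [] ` ?T"
    proof
      fix r assume "r \<in> ?S"
      then have r: "run EAA r x" "hd r = ([], [])" "last r = ([], [])" "([], []) \<notin> set (butlast (tl r))" by auto
      have l: "length r = Suc (length x)" using r(1) unfolding run_def by auto
      have nz: "\<forall>i. 0 < i \<and> i < length x \<longrightarrow> r ! i \<noteq> ([], [])" using notin_bt[OF l] r(4) by blast
      obtain y where "y \<noteq> []" "[] @ y \<in> Y" "r = cf \<beta> [] y" "x = concat (map \<beta> y)"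
        using FR_char[OF r(1) r(2) r(3) xne nz] by blast
      then show "r \<in> cf \<beta> [] ` ?T" by auto
    qed
    show "cf \<beta> [] ` ?T \<subseteq> ?S"
    proof
      fix r assume "r \<in> cf \<beta> [] ` ?T"
      then obtain y where y: "y \<in> Y" "concat (map \<beta> y) = x" "r = cf \<beta> [] y" by auto
      have yne: "y \<noteq> []" using y Y0 by auto
      have l: "length r = Suc (length x)" using y cf_len by simp
      have "run EAA r x" using cf_run[OF yne] y by simp
      moreover have "hd r = ([], [])" using cf_hd[OF yne] y by simp
      moreover have "last r = ([], [])" using cf_last y by simp
      moreover have "([], []) \<notin> set (butlast (tl r))"
        using notin_bt[OF l] cf_nz[OF yne] y by auto
      ultimately show "r \<in> ?S" by auto
    qed
  qed
  show ?thesis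
  proof (cases "x \<in> XX")
    case True
    then obtain y0 where y0: "y0 \<in> Y" "x = concat (map \<beta> y0)" unfolding compose_def by auto
    have "?T = {y0}" using y0 trm unfolding trim_def inj_on_def by auto
    then show ?thesis using True eq by simp
  next
    case False
    then have T0: "?T = {}" unfolding compose_def by auto
    show ?thesis using False unfolding eq T0 by simp
  qed
qed

lemma partA: "num_paths EAA ([], []) w ([], []) = num_factorizations XX w"
proof (induction w rule: length_induct)
  case (1 w)
  show ?case
  proof (cases "w = []")
    case True
    have a: "{ss. run EAA ss [] \<and> hd ss = ([], []) \<and> last ss = ([], [])} = {[([], [])]}"
      by (auto simp: run_Nil)
    have b: "{xs. xs \<in> lists XX \<and> concat xs = []} = {[]}"
      using XX_nil by (auto, metis concat_eq_Nil_conv in_listsD neq_Nil_conv list.set_intros(1))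
    show ?thesis unfolding True num_paths_def num_factorizations_def a b by simp
  next
    case False
    have "num_paths EAA ([], []) w ([], []) =
      (\<Sum>k\<in>{1..length w}. card {r. run EAA r (take k w) \<and> hd r = ([], []) \<and> last r = ([], []) \<and> ([], []) \<notin> set (butlast (tl r))}
        * card {r. run EAA r (drop k w) \<and> hd r = ([], []) \<and> last r = ([], [])})"
      unfolding num_paths_def by (rule first_return[OF EA_fin False])
    also have "\<dots> = (\<Sum>k\<in>{1..length w}. (if take k w \<in> XX then 1 else 0) * num_factorizations XX (drop k w))"
    proof (rule sum.cong)
      fix k assume k: "k \<in> {1..length w}"
      then have "take k w \<noteq> []" using False by auto
      moreover have "length (drop k w) < length w" using k by auto
      ultimately show "card {r. run EAA r (take k w) \<and> hd r = ([], []) \<and> last r = ([], []) \<and> ([], []) \<notin> set (butlast (tl r))}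
        * card {r. run EAA r (drop k w) \<and> hd r = ([], []) \<and> last r = ([], [])} =
        (if take k w \<in> XX then 1 else 0) * num_factorizations XX (drop k w)"
        using R_val "1.IH" unfolding num_paths_def by simp
    qed simp
    also have "\<dots> = num_factorizations XX w" using fact_rec[OF XX_fin XX_nil False] by simp
    finally show ?thesis .
  qed
qed

lemma partC:
  assumes "q \<in> QQ" "q' \<in> QQ"
  shows "(q, b, q') \<in> EBB \<longleftrightarrow>
    (\<exists>ss. run EAA ss (\<beta> b) \<and> hd ss = (q, []) \<and> last ss = (q', []) \<and>
       (\<forall>i. 0 < i \<and> i < length (\<beta> b) \<longrightarrow> snd (ss ! i) \<noteq> []))"
proof
  assume e: "(q, b, q') \<in> EBB"
  let ?ss = "blk q (\<beta> b) @ [(q', [])]"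
  have "run EAA ?ss (\<beta> b)" by (rule segrun[OF e])
  moreover have "hd ?ss = (q, [])" using beta_ne[of b]
    by (auto simp: blk_def hd_append upt_conv_Cons[of 0])
  moreover have "last ?ss = (q', [])" by simp
  moreover have "\<forall>i. 0 < i \<and> i < length (\<beta> b) \<longrightarrow> snd (?ss ! i) \<noteq> []"
    by (auto simp: blk_def nth_append)
  ultimately show "\<exists>ss. run EAA ss (\<beta> b) \<and> hd ss = (q, []) \<and> last ss = (q', []) \<and>
       (\<forall>i. 0 < i \<and> i < length (\<beta> b) \<longrightarrow> snd (ss ! i) \<noteq> [])" by blast
next
  assume "\<exists>ss. run EAA ss (\<beta> b) \<and> hd ss = (q, []) \<and> last ss = (q', []) \<and>
       (\<forall>i. 0 < i \<and> i < length (\<beta> b) \<longrightarrow> snd (ss ! i) \<noteq> [])"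
  then obtain ss where ss: "run EAA ss (\<beta> b)" "hd ss = (q, [])" "last ss = (q', [])"
    "\<forall>i. 0 < i \<and> i < length (\<beta> b) \<longrightarrow> snd (ss ! i) \<noteq> []" by blast
  obtain b' where "\<beta> b = \<beta> b'" "(q, b', q') \<in> EBB" using seg_last[OF ss(1,2,4) beta_ne ss(3)] by blast
  then show "(q, b, q') \<in> EBB" using inj_beta by (metis injD)
qed

end



fun outp :: "('b \<Rightarrow> 'a list) \<Rightarrow> 'a list list \<Rightarrow> 'a list \<Rightarrow> 'b list" where
  "outp \<beta> (p # p' # ts) (a # w) = (if p' = [] then [inv \<beta> (p @ [a])] else []) @ outp \<beta> (p' # ts) w"
| "outp \<beta> _ _ = []"

context L
begin

lemma lift:
  "run EZZ ts w \<Longrightarrow> run EBB qs (outp \<beta> ts w) \<Longrightarrow> set qs \<subseteq> QQ \<Longrightarrow>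
   \<exists>ss. run EAA ss w \<and> hd ss = (hd qs, hd ts) \<and> last ss = (last qs, last ts)"
proof (induction w arbitrary: ts qs)
  case Nil
  then obtain t where t: "ts = [t]" by (auto simp: run_Nil)
  have "outp \<beta> ts [] = []" using t by simp
  then obtain q where q: "qs = [q]" using Nil by (auto simp: run_Nil)
  show ?case using t q by (intro exI[of _ "[(q, t)]"]) (auto simp: run_Nil)
next
  case (Cons a w)
  obtain p ts' where ts: "ts = p # ts'" using run_ne[OF Cons.prems(1)] by (cases ts) auto
  have ts'ne: "ts' \<noteq> []" and e: "(p, a, hd ts') \<in> EZZ" and rt: "run EZZ ts' w"
    using Cons.prems(1) unfolding ts run_Cons by auto
  obtain p' ts'' where ts': "ts' = p' # ts''" using ts'ne by (cases ts') auto
  have qsne: "qs \<noteq> []" using run_ne[OF Cons.prems(2)] .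
  show ?case
  proof (cases "p' = []")
    case False
    then have pp: "p' = p @ [a]" "p \<in> PP" "p @ [a] \<in> PP" using e unfolding ts' by (auto simp: EZ_iff)
    have o: "outp \<beta> ts (a # w) = outp \<beta> ts' w" using False unfolding ts ts' by simp
    obtain ss' where ss': "run EAA ss' w" "hd ss' = (hd qs, hd ts')" "last ss' = (last qs, last ts')"
      using Cons.IH[OF rt] Cons.prems(2,3) o by auto
    have hq: "hd qs \<in> QQ" using Cons.prems(3) qsne by auto
    have "((hd qs, p), a, hd ss') \<in> EAA" unfolding ss'(2) ts' using pp hq by (simp add: EA_iff)
    then have "run EAA ((hd qs, p) # ss') (a # w)" using ss'(1) run_ne[OF ss'(1)] by (simp add: run_Cons)
    moreover have "last ((hd qs, p) # ss') = (last qs, last ts)" using ss'(3) run_ne[OF ss'(1)] ts ts'ne by simp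
    ultimately show ?thesis using ts by auto
  next
    case True
    then have pp: "p \<in> PP" "p @ [a] \<in> Z" using e unfolding ts' by (auto simp: EZ_iff)
    define b where "b = inv \<beta> (p @ [a])"
    have bb: "\<beta> b = p @ [a]" unfolding b_def using Z_range[OF pp(2)] .
    have o: "outp \<beta> ts (a # w) = b # outp \<beta> ts' w" using True unfolding ts ts' b_def by simp
    obtain q qs' where qs: "qs = q # qs'" using qsne by (cases qs) auto
    have qs'ne: "qs' \<noteq> []" and eb: "(q, b, hd qs') \<in> EBB" and rq: "run EBB qs' (outp \<beta> ts' w)"
      using Cons.prems(2) unfolding o qs run_Cons by auto
    obtain ss' where ss': "run EAA ss' w" "hd ss' = (hd qs', hd ts')" "last ss' = (last qs', last ts')"
      using Cons.IH[OF rt rq] Cons.prems(3) qs by auto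
    have ex: "\<exists>b. p @ [a] = \<beta> b \<and> (q, b, hd qs') \<in> EBB" using bb eb by metis
    have "((q, p), a, hd ss') \<in> EAA" unfolding ss'(2) ts' using pp True ex by (simp add: EA_iff)
    then have "run EAA ((q, p) # ss') (a # w)" using ss'(1) run_ne[OF ss'(1)] by (simp add: run_Cons)
    moreover have "last ((q, p) # ss') = (last qs, last ts)" using ss'(3) run_ne[OF ss'(1)] ts ts'ne qs qs'ne by simp
    ultimately show ?thesis using ts qs by auto
  qed
qed

definition brun :: "'b list \<Rightarrow> 'b list list" where
  "brun y = map (\<lambda>i. take i y) [0..<length y] @ [[]]"

lemma brun_ok:
  assumes y: "y \<in> Y"
  shows "run EBB (brun y) y \<and> hd (brun y) = [] \<and> last (brun y) = [] \<and> set (brun y) \<subseteq> QQ"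
proof -
  have yne: "y \<noteq> []" using y Y0 by auto
  have r: "run EBB (brun y) y" unfolding run_def
  proof (intro conjI allI impI)
    show "length (brun y) = Suc (length y)" by (simp add: brun_def)
    fix i assume i: "i < length y"
    have si: "brun y ! i = take i y" using i by (simp add: brun_def nth_append)
    have ti: "take i y \<in> QQ" using take_in_ps[OF y i] .
    show "(brun y ! i, y ! i, brun y ! Suc i) \<in> EBB"
    proof (cases "Suc i < length y")
      case True
      then have s1: "brun y ! Suc i = take i y @ [y ! i]" by (simp add: brun_def nth_append take_Suc_conv_app_nth)
      have "take i y @ [y ! i] \<in> QQ" using take_in_ps[OF y True] i by (simp add: take_Suc_conv_app_nth)
      then show ?thesis unfolding si s1 using ti by (simp add: EB_iff)
    next
      case False
      then have s1: "brun y ! Suc i = []" using i by (simp add: brun_def nth_append)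
      have "take i y @ [y ! i] = y" using False i
        by (metis Suc_leI le_antisym not_less take_Suc_conv_app_nth take_all)
      then show ?thesis unfolding si s1 using ti y by (simp add: EB_iff)
    qed
  qed
  moreover have "hd (brun y) = []" using yne by (simp add: brun_def hd_append upt_conv_Cons[of 0])
  moreover have "last (brun y) = []" by (simp add: brun_def)
  moreover have "set (brun y) \<subseteq> QQ" using take_in_ps[OF y] Nil_Q by (auto simp: brun_def)
  ultimately show ?thesis by blast
qed

lemma ys_run: "ys \<in> lists Y \<Longrightarrow> \<exists>qs. run EBB qs (concat ys) \<and> hd qs = [] \<and> last qs = [] \<and> set qs \<subseteq> QQ"
proof (induction ys)
  case Nil
  then show ?case using Nil_Q by (intro exI[of _ "[[]]"]) (auto simp: run_Nil)
next
  case (Cons y ys)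
  then obtain qs where qs: "run EBB qs (concat ys)" "hd qs = []" "last qs = []" "set qs \<subseteq> QQ" by auto
  have b: "run EBB (brun y) y \<and> hd (brun y) = [] \<and> last (brun y) = [] \<and> set (brun y) \<subseteq> QQ"
    using brun_ok Cons.prems by auto
  have "run EBB (brun y @ tl qs) (y @ concat ys)" using run_glue[of EBB "brun y" y qs] b qs by auto
  moreover have "hd (brun y @ tl qs) = []" using b run_ne[of EBB "brun y" y] by auto
  moreover have "last (brun y @ tl qs) = []" using b qs by (cases "tl qs = []") (auto simp: last_tl)
  moreover have "set (tl qs) \<subseteq> set qs" by (cases qs) auto
  then have "set (brun y @ tl qs) \<subseteq> QQ" using b qs(4) by auto
  ultimately show ?case by (metis concat.simps(2))
qed

lemma readable:
  assumes c: "complete Y"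
  shows "\<exists>qs. run EBB qs v \<and> set qs \<subseteq> QQ"
proof -
  obtain ys where ys: "ys \<in> lists Y" "sublist v (concat ys)" using c unfolding complete_def by blast
  then obtain u u' where cu: "concat ys = u @ v @ u'" unfolding sublist_def by blast
  obtain qs where qs: "run EBB qs (concat ys)" "set qs \<subseteq> QQ" using ys_run[OF ys(1)] by blast
  have "run EBB (drop (length u) qs) (v @ u')" using run_drop[OF qs(1), of "length u"] cu by simp
  then have "run EBB (take (Suc (length v)) (drop (length u) qs)) v"
    using run_take[of EBB "drop (length u) qs" "v @ u'" "length v"] by simp
  moreover have "set (take (Suc (length v)) (drop (length u) qs)) \<subseteq> QQ"
    using qs(2) by (meson order.trans set_drop_subset set_take_subset)
  ultimately show ?thesis by blast
qed

lemma proj: "run EAA ss w \<Longrightarrow> run EZZ (map snd ss) w"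
  unfolding run_def
proof (intro conjI allI impI; (elim conjE)?)
  fix i assume l: "length ss = Suc (length w)" and a: "\<forall>i<length w. (ss ! i, w ! i, ss ! Suc i) \<in> EAA"
    and i: "i < length w"
  obtain q p q' p' where s: "ss ! i = (q, p)" "ss ! Suc i = (q', p')" by (cases "ss ! i", cases "ss ! Suc i") auto
  have "((q, p), w ! i, (q', p')) \<in> EAA" using a i s by metis
  then have "(p, w ! i, p') \<in> EZZ" unfolding EA_iff EZ_iff using beta_Z by auto
  then show "(map snd ss ! i, w ! i, map snd ss ! Suc i) \<in> EZZ" using s i l by simp
qed (auto simp: run_def)

lemma partB: "complete Y \<Longrightarrow> reduction snd (QQ \<times> PP) EAA ([], []) ([], []) PP EZZ [] []"
  unfolding reduction_def
proof (intro conjI ballI allI)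
  assume c: "complete Y"
  show "snd ` (QQ \<times> PP) = PP" using Nil_Q by force
  show "snd ([], []) = []" by simp
  show "snd ([], []) = []" by simp
  fix q q' w assume q: "q \<in> PP" and q': "q' \<in> PP"
  show "has_path EZZ q w q' = (\<exists>p\<in>QQ \<times> PP. \<exists>p'\<in>QQ \<times> PP. snd p = q \<and> snd p' = q' \<and> has_path EAA p w p')"
  proof
    assume "has_path EZZ q w q'"
    then obtain ts where ts: "run EZZ ts w" "hd ts = q" "last ts = q'" unfolding has_path_def by blast
    obtain qs where qs: "run EBB qs (outp \<beta> ts w)" "set qs \<subseteq> QQ" using readable[OF c] by blast
    obtain ss where ss: "run EAA ss w" "hd ss = (hd qs, hd ts)" "last ss = (last qs, last ts)"
      using lift[OF ts(1) qs] by blast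
    have "hd qs \<in> QQ" "last qs \<in> QQ" using qs(2) run_ne[OF qs(1)] by auto
    then show "\<exists>p\<in>QQ \<times> PP. \<exists>p'\<in>QQ \<times> PP. snd p = q \<and> snd p' = q' \<and> has_path EAA p w p'"
      using ss ts q q' unfolding has_path_def by (intro bexI[of _ "(hd qs, q)"] bexI[of _ "(last qs, q')"]) auto
  next
    assume "\<exists>p\<in>QQ \<times> PP. \<exists>p'\<in>QQ \<times> PP. snd p = q \<and> snd p' = q' \<and> has_path EAA p w p'"
    then obtain p p' ss where h: "snd p = q" "snd p' = q'" "run EAA ss w" "hd ss = p" "last ss = p'"
      unfolding has_path_def by blast
    have "run EZZ (map snd ss) w" using proj[OF h(3)] .
    moreover have "hd (map snd ss) = q" "last (map snd ss) = q'" using h run_ne[OF h(3)] by (auto simp: hd_map last_map)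
    ultimately show "has_path EZZ q w q'" unfolding has_path_def by blast
  qed
qed

end

theorem mainTheorem5:
  fixes Y :: "'b list set" and Z :: "'a list set" and \<beta> :: "'b \<Rightarrow> 'a list"
  assumes "[] \<notin> Y" and "[] \<notin> Z"
    and "composable Y Z \<beta>"
    and "trim Y \<beta>"
  defines "X \<equiv> compose Y \<beta>"
    and "Q \<equiv> prefix_states Y" and "EB \<equiv> prefix_edges Y"
    and "P \<equiv> prefix_states Z" and "ET \<equiv> prefix_transducer_edges \<beta> Z"
    and "EA \<equiv> wreath_edges (prefix_states Y) (prefix_edges Y) (prefix_transducer_edges \<beta> Z)"
  shows "(\<forall>w. num_paths EA ([], []) w ([], []) = num_factorizations X w)
    \<and> (complete Y \<longrightarrow>
         reduction snd (Q \<times> P) EA ([], []) ([], []) P (prefix_edges Z) [] [])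
    \<and> (\<forall>q\<in>Q. \<forall>q'\<in>Q. \<forall>b. (q, b, q') \<in> EB \<longleftrightarrow>
         (\<exists>ss. run EA ss (\<beta> b) \<and> hd ss = (q, []) \<and> last ss = (q', []) \<and>
               (\<forall>i. 0 < i \<and> i < length (\<beta> b) \<longrightarrow> snd (ss ! i) \<noteq> [])))"
proof -
  interpret L Y Z \<beta> using assms(1-4) by (rule L.intro)
  have a: "\<forall>w. num_paths EA ([], []) w ([], []) = num_factorizations X w"
    unfolding EA_def X_def using partA by blast
  have b: "complete Y \<longrightarrow> reduction snd (Q \<times> P) EA ([], []) ([], []) P (prefix_edges Z) [] []"
    unfolding EA_def Q_def P_def using partB by blast
  have c: "\<forall>q\<in>Q. \<forall>q'\<in>Q. \<forall>b. (q, b, q') \<in> EB \<longleftrightarrow>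
         (\<exists>ss. run EA ss (\<beta> b) \<and> hd ss = (q, []) \<and> last ss = (q', []) \<and>
               (\<forall>i. 0 < i \<and> i < length (\<beta> b) \<longrightarrow> snd (ss ! i) \<noteq> []))"
    unfolding EA_def Q_def EB_def using partC by blast
  show ?thesis using a b c by blast
qed

end
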